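(* Let $\{a,b\}$ be a $2$-element generating set of a finite abelian group $G$ such that $\mathrm{Cay}(G;a,b)$ does not have a hamiltonian cycle, $|G|$ is even, and $|G:\langle a-b\rangle|$ is odd. If $P$ and $P'$ are two arc-disjoint hamiltonian paths in $\mathrm{Cay}(G;a,b)$, with initial vertices $\iota$ and $\iota'$ and terminal vertices $\tau$ and $\tau'$ respectively, then $\iota'+\tau'=\iota+\tau$.
   Context: The Cayley digraph $\mathrm{Cay}(G;a,b)$ has vertex set $G$ and an arc from $v$ to $v+s$ for all $v\in G$, $s\in\{a,b\}$. A hamiltonian path (resp. cycle) is a directed path (resp. directed cycle) visiting every vertex exactly once; the initial and terminal vertices of a path are its first and last vertices. Arc-disjoint means sharing no arc. *)

theory Defs
  imports Main
begin

inductive_set gen_subgroup :: "'a::ab_group_add set \<Rightarrow> 'a set" for S where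
  base: "x \<in> S \<Longrightarrow> x \<in> gen_subgroup S"
| zero: "0 \<in> gen_subgroup S"
| add: "x \<in> gen_subgroup S \<Longrightarrow> y \<in> gen_subgroup S \<Longrightarrow> x + y \<in> gen_subgroup S"
| neg: "x \<in> gen_subgroup S \<Longrightarrow> - x \<in> gen_subgroup S"

definition cay_arc :: "'a::ab_group_add \<Rightarrow> 'a \<Rightarrow> 'a \<Rightarrow> 'a \<Rightarrow> bool" where
  "cay_arc a b u v \<longleftrightarrow> v = u + a \<or> v = u + b"

definition ham_path :: "'a::{ab_group_add,finite} \<Rightarrow> 'a \<Rightarrow> 'a list \<Rightarrow> bool" where
  "ham_path a b vs \<longleftrightarrow> distinct vs \<and> set vs = UNIV \<and>
     (\<forall>i. Suc i < length vs \<longrightarrow> cay_arc a b (vs ! i) (vs ! Suc i))"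

definition path_arcs :: "'a list \<Rightarrow> ('a \<times> 'a) set" where
  "path_arcs vs = {(vs ! i, vs ! Suc i) | i. Suc i < length vs}"

definition ham_cycle :: "'a::{ab_group_add,finite} \<Rightarrow> 'a \<Rightarrow> 'a list \<Rightarrow> bool" where
  "ham_cycle a b vs \<longleftrightarrow> ham_path a b vs \<and> vs \<noteq> [] \<and> cay_arc a b (last vs) (hd vs)"

definition subgroup_index :: "'a::finite set \<Rightarrow> nat" where
  "subgroup_index H = card (UNIV :: 'a set) div card H"

end

theory Submission
  imports Defs "HOL-Combinatorics.Cycles"
begin

primrec nm :: "nat \<Rightarrow> 'a::ab_group_add \<Rightarrow> 'a" where
  "nm 0 x = 0"
| "nm (Suc n) x = x + nm n x"

lemma nm_add: "nm (i + j) x = nm i x + nm j x"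
  by (induction i) (auto simp: algebra_simps)

lemma nm_one[simp]: "nm 1 x = x" by simp

lemma nm_neg: "nm j (- x) = - nm j x"
  by (induction j) (auto simp: algebra_simps)

lemma nm_mult_zero: "nm m x = 0 \<Longrightarrow> nm (m * j) x = 0"
  by (induction j) (auto simp: nm_add)

lemma nm_mod: "nm m x = 0 \<Longrightarrow> nm (j mod m) x = nm j x"
proof -
  assume "nm m x = 0"
  have "nm j x = nm (j mod m + m * (j div m)) x" by simp
  also have "\<dots> = nm (j mod m) x + nm (m * (j div m)) x" by (rule nm_add)
  also have "\<dots> = nm (j mod m) x" using nm_mult_zero[OF \<open>nm m x = 0\<close>] by simp
  finally show ?thesis by simp
qed

lemma nm_diff: "i \<le> j \<Longrightarrow> nm (j - i) x = nm j x - nm i x"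
  using nm_add[of "j - i" i x] by simp

lemma sign_cycle_of_list: "distinct cs \<Longrightarrow> sign (cycle_of_list cs) = (-1) ^ (length cs - 1)"
proof (induction cs rule: cycle_of_list.induct)
  case (1 i j cs)
  have "sign (cycle_of_list (i # j # cs)) = sign (transpose i j) * sign (cycle_of_list (j # cs))"
    by (simp add: sign_compose permutation_swap_id permutation_of_cycle)
  also have "\<dots> = (-1) * (-1) ^ (length (j # cs) - 1)" using 1 by (simp add: sign_swap_id)
  finally show ?case by (simp add: o_def)
qed (auto simp: sign_id)

lemma cycle_of_list_nth:
  assumes "distinct cs" "i < length cs"
  shows "cycle_of_list cs (cs ! i) = cs ! (Suc i mod length cs)"
proof -
  have "map (cycle_of_list cs ^^ 1) cs = rotate 1 cs" by (rule cyclic_rotation[OF assms(1)])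
  then have "map (cycle_of_list cs) cs = rotate1 cs" by simp
  then have "map (cycle_of_list cs) cs ! i = rotate1 cs ! i" by simp
  then show ?thesis using assms by (simp add: nth_rotate1)
qed

definition AP :: "'a::ab_group_add \<Rightarrow> 'a \<Rightarrow> nat \<Rightarrow> 'a list" where
  "AP x c L = map (\<lambda>j. x + nm j c) [0..<L]"

lemma AP_cycle:
  assumes "distinct (AP x c L)"
  shows "cycle_of_list (AP x c L) y =
    (if y \<in> set (AP x c L) then (if y = x + nm (L - 1) c then x else y + c) else y)"
proof (cases "y \<in> set (AP x c L)")
  case False then show ?thesis by (simp add: id_outside_supp)
next
  case True
  then obtain i where i: "i < L" "y = x + nm i c" by (auto simp: AP_def)
  have len: "length (AP x c L) = L" by (simp add: AP_def)
  have yi: "y = AP x c L ! i" using i by (simp add: AP_def)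
  have cyc: "cycle_of_list (AP x c L) y = AP x c L ! (Suc i mod L)"
    using cycle_of_list_nth[OF assms, of i] i len yi by simp
  show ?thesis
  proof (cases "Suc i = L")
    case True
    then have "i = L - 1" by simp
    then show ?thesis using cyc i True by (simp add: AP_def)
  next
    case False
    then have "Suc i < L" using i by simp
    then have c1: "cycle_of_list (AP x c L) y = y + c" using cyc i by (simp add: AP_def algebra_simps)
    have "AP x c L ! (L - 1) = x + nm (L - 1) c" using i by (simp add: AP_def)
    moreover have "AP x c L ! (L - 1) \<noteq> AP x c L ! i"
      using nth_eq_iff_index_eq[OF assms, of "L - 1" i] len i False by auto
    ultimately have "y \<noteq> x + nm (L - 1) c" using yi by simp
    then show ?thesis using c1 True by simp
  qed
qed

lemma sign_AP: "distinct (AP x c L) \<Longrightarrow> sign (cycle_of_list (AP x c L)) = (-1) ^ (L - 1)"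
  using sign_cycle_of_list[of "AP x c L"] by (simp add: AP_def)


lemma nm_exists_zero:
  fixes c :: "'a::{ab_group_add,finite}"
  shows "\<exists>m>0. nm m c = 0"
proof -
  have "\<not> inj (\<lambda>j::nat. nm j c)"
  proof
    assume "inj (\<lambda>j::nat. nm j c)"
    then have "finite (UNIV :: nat set)"
      using finite_imageD[of "\<lambda>j::nat. nm j c" UNIV] by simp
    then show False by simp
  qed
  then obtain i j :: nat where ij: "i \<noteq> j" "nm i c = nm j c" unfolding inj_def by blast
  show ?thesis
  proof (cases "i < j")
    case True
    then have "nm (j - i) c = 0" using ij nm_diff[of i j c] by simp
    then show ?thesis using True by (intro exI[of _ "j - i"]) simp
  next
    case False
    then have "j < i" using ij by simp
    then have "nm (i - j) c = 0" using ij nm_diff[of j i c] by simp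
    then show ?thesis using \<open>j < i\<close> by (intro exI[of _ "i - j"]) simp
  qed
qed

definition ordr :: "'a::{ab_group_add,finite} \<Rightarrow> nat" where
  "ordr c = (LEAST m. 0 < m \<and> nm m c = 0)"

lemma ordr_props:
  fixes c :: "'a::{ab_group_add,finite}"
  shows "0 < ordr c" "nm (ordr c) c = 0"
proof -
  obtain m where "0 < m \<and> nm m c = 0" using nm_exists_zero by blast
  then have "0 < ordr c \<and> nm (ordr c) c = 0" unfolding ordr_def by (rule LeastI)
  then show "0 < ordr c" "nm (ordr c) c = 0" by auto
qed

lemma ordr_inj:
  fixes c :: "'a::{ab_group_add,finite}"
  assumes "i < ordr c" "j < ordr c" "nm i c = nm j c"
  shows "i = j"
proof (rule ccontr)
  assume ne: "i \<noteq> j"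
  { fix i j :: nat assume "i < j" "j < ordr c" "nm i c = nm j c"
    then have "nm (j - i) c = 0" using nm_diff[of i j c] by simp
    moreover have "j - i < ordr c" "0 < j - i" using \<open>i < j\<close> \<open>j < ordr c\<close> by auto
    ultimately have False using not_less_Least[of "j - i" "\<lambda>m. 0 < m \<and> nm m c = 0"]
      unfolding ordr_def by auto }
  then show False using assms ne by (metis linorder_neqE_nat)
qed

lemma transl_sign:
  fixes c :: "'a::ab_group_add"
  assumes m: "0 < m" "nm m c = 0"
    and inj: "\<And>i j. i < m \<Longrightarrow> j < m \<Longrightarrow> nm i c = nm j c \<Longrightarrow> i = j"
  shows "finite U \<Longrightarrow> (\<forall>x\<in>U. x + c \<in> U) \<Longrightarrow> m dvd card U \<and>
     permutation (restrict_id (\<lambda>x. x + c) U) \<and>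
     sign (restrict_id (\<lambda>x. x + c) U) = (-1) ^ ((m - 1) * (card U div m))"
proof (induction "card U" arbitrary: U rule: less_induct)
  case less
  show ?case
  proof (cases "U = {}")
    case True
    have "restrict_id (\<lambda>x. x + c) U = id" using True by (auto simp: restrict_id_def fun_eq_iff)
    then show ?thesis using True by (simp add: permutation_id)
  next
    case False
    then obtain x where x: "x \<in> U" by blast
    define Ob where "Ob = set (AP x c m)"
    have Osub: "x + nm j c \<in> U" for j
    proof (induction j)
      case (Suc j)
      then have "x + nm j c + c \<in> U" using less.prems(2) by blast
      then show ?case by (simp add: algebra_simps)
    qed (use x in simp)
    then have "Ob \<subseteq> U" by (auto simp: Ob_def AP_def)
    have dist: "distinct (AP x c m)"
    proof -
      have "inj_on (\<lambda>j. x + nm j c) {0..<m}"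
      proof (rule inj_onI)
        fix i j assume "i \<in> {0..<m}" "j \<in> {0..<m}" "x + nm i c = x + nm j c"
        then show "i = j" by (intro inj) auto
      qed
      then show ?thesis unfolding AP_def by (simp add: distinct_map)
    qed
    have cardO: "card Ob = m" using distinct_card[OF dist] by (simp add: Ob_def AP_def)
    have nmm1: "nm (m - 1) c = - c"
    proof -
      have sm: "Suc (m - 1) = m" using m by simp
      have "c + nm (m - 1) c = nm (Suc (m - 1)) c" by (simp only: nm.simps)
      also have "\<dots> = 0" unfolding sm by (rule m(2))
      finally show ?thesis by (metis neg_eq_iff_add_eq_0)
    qed
    define U' where "U' = U - Ob"
    have fin': "finite U'" using less.prems by (simp add: U'_def)
    have closed': "\<forall>y\<in>U'. y + c \<in> U'"
    proof
      fix y assume y: "y \<in> U'"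
      then have "y + c \<in> U" using less.prems(2) by (auto simp: U'_def)
      moreover have "y + c \<notin> Ob"
      proof
        assume "y + c \<in> Ob"
        then obtain j where j: "j < m" "y + c = x + nm j c" by (auto simp: Ob_def AP_def)
        show False
        proof (cases j)
          case 0
          then have "y = x + nm (m - 1) c" using j nmm1 by (simp add: algebra_simps)
          then have "y \<in> Ob" using m by (auto simp: Ob_def AP_def)
          then show False using y by (simp add: U'_def)
        next
          case (Suc j')
          then have "y = x + nm j' c" using j by (simp add: algebra_simps)
          then have "y \<in> Ob" using j Suc by (auto simp: Ob_def AP_def)
          then show False using y by (simp add: U'_def)
        qed
      qed
      ultimately show "y + c \<in> U'" by (simp add: U'_def)
    qed
    have cardU: "card U = m + card U'"
      using \<open>Ob \<subseteq> U\<close> less.prems(1) cardO card_Diff_subset[of Ob U] card_mono[of U Ob]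
      by (simp add: U'_def finite_subset)
    have "card U' < card U" using cardU m by simp
    then have IH: "m dvd card U' \<and> permutation (restrict_id (\<lambda>x. x + c) U') \<and>
       sign (restrict_id (\<lambda>x. x + c) U') = (-1) ^ ((m - 1) * (card U' div m))"
      using less.hyps fin' closed' by blast
    have decomp: "restrict_id (\<lambda>x. x + c) U = cycle_of_list (AP x c m) \<circ> restrict_id (\<lambda>x. x + c) U'"
    proof
      fix y
      show "restrict_id (\<lambda>x. x + c) U y = (cycle_of_list (AP x c m) \<circ> restrict_id (\<lambda>x. x + c) U') y"
      proof (cases "y \<in> Ob")
        case True
        then have "y \<in> U" "y \<notin> U'" using \<open>Ob \<subseteq> U\<close> by (auto simp: U'_def)
        moreover have "x + nm (m - 1) c + c = x" using nmm1 by simp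
        ultimately show ?thesis using True AP_cycle[OF dist, of y]
          by (auto simp: restrict_id_def Ob_def)
      next
        case False
        show ?thesis
        proof (cases "y \<in> U'")
          case True
          then have "y + c \<in> U'" using closed' by blast
          then have "y + c \<notin> Ob" by (simp add: U'_def)
          then show ?thesis using True False AP_cycle[OF dist, of "y + c"] \<open>Ob \<subseteq> U\<close>
            by (auto simp: restrict_id_def Ob_def U'_def)
        next
          case False': False
          then have "y \<notin> U" using False by (simp add: U'_def)
          then show ?thesis using False False' AP_cycle[OF dist, of y]
            by (auto simp: restrict_id_def Ob_def)
        qed
      qed
    qed
    have perm: "permutation (restrict_id (\<lambda>x. x + c) U)"
      unfolding decomp using IH by (simp add: permutation_compose permutation_of_cycle)
    have "sign (restrict_id (\<lambda>x. x + c) U) = (-1) ^ (m - 1) * (-1) ^ ((m - 1) * (card U' div m))"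
      unfolding decomp using IH sign_AP[OF dist] by (simp add: sign_compose permutation_of_cycle)
    also have "\<dots> = (-1) ^ ((m - 1) * (card U div m))"
    proof -
      have "card U div m = Suc (card U' div m)" using cardU m IH by auto
      then show ?thesis by (simp add: power_add)
    qed
    finally show ?thesis using perm IH cardU by simp
  qed
qed


lemma permutation_finite_bij:
  fixes p :: "'a::finite \<Rightarrow> 'a"
  shows "bij p \<Longrightarrow> permutation p"
  by (simp add: permutation)

locale hpath =
  fixes a b :: "'g::{ab_group_add,finite}" and P :: "'g list" and h :: 'g and m :: nat
  assumes ab: "a \<noteq> b" and ham: "ham_path a b P" and nocyc: "\<not> (\<exists>C. ham_cycle a b C)"
    and h_def: "h = a - b" and m_def: "m = ordr h"
begin

definition "tau = last P"
definition "iota = hd P"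
definition "F = cycle_of_list P"
definition "sig = (\<lambda>v. F v - a)"
definition "vv j = tau + nm j h"
definition "C0 = vv ` {..<m}"

lemma dist: "distinct P" and setP: "set P = UNIV"
  using ham by (auto simp: ham_path_def)

lemma nonempty: "P \<noteq> []"
  using setP by auto

lemma lenP: "length P = card (UNIV :: 'g set)"
  using distinct_card[OF dist] setP by simp

lemma F_step: "Suc i < length P \<Longrightarrow> F (P ! i) = P ! Suc i"
  using cycle_of_list_nth[OF dist, of i] by (simp add: F_def)

lemma F_tau: "F tau = iota"
proof -
  have l: "length P - 1 < length P" using nonempty by simp
  have "F (P ! (length P - 1)) = P ! (Suc (length P - 1) mod length P)"
    using cycle_of_list_nth[OF dist l] by (simp add: F_def)
  also have "Suc (length P - 1) = length P" using nonempty by simp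
  finally show ?thesis using nonempty by (simp add: tau_def iota_def last_conv_nth hd_conv_nth)
qed

lemma perm_F: "permutation F"
  by (simp add: F_def permutation_of_cycle)

lemma sign_F: "sign F = (-1) ^ (card (UNIV :: 'g set) - 1)"
  using sign_cycle_of_list[OF dist] lenP by (simp add: F_def)

lemma not_tau_idx:
  assumes "y \<noteq> tau"
  obtains i where "Suc i < length P" "P ! i = y"
proof -
  obtain i where i: "i < length P" "P ! i = y" using setP by (metis UNIV_I in_set_conv_nth)
  have "i \<noteq> length P - 1" using assms i nonempty by (auto simp: tau_def last_conv_nth)
  then have "Suc i < length P" using i by simp
  then show ?thesis using i that by blast
qed

lemma F_arc: "y \<noteq> tau \<Longrightarrow> F y = y + a \<or> F y = y + b"
proof -
  assume "y \<noteq> tau"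
  then obtain i where i: "Suc i < length P" "P ! i = y" by (rule not_tau_idx)
  have "cay_arc a b (P ! i) (P ! Suc i)" using ham i(1) unfolding ham_path_def by blast
  then show ?thesis using F_step[OF i(1)] i by (simp add: cay_arc_def)
qed

lemma F_in_arcs: "y \<noteq> tau \<Longrightarrow> (y, F y) \<in> path_arcs P"
proof -
  assume "y \<noteq> tau"
  then obtain i where i: "Suc i < length P" "P ! i = y" by (rule not_tau_idx)
  then show ?thesis using F_step[OF i(1)] by (auto simp: path_arcs_def)
qed

lemma h_nz: "h \<noteq> 0" using ab h_def by simp

lemma sig_cases: "y \<noteq> tau \<Longrightarrow> sig y = y \<or> sig y = y - h"
  using F_arc[of y] by (auto simp: sig_def h_def algebra_simps)

lemma perm_sig: "permutation sig"
proof -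
  have "sig = (\<lambda>x. x - a) \<circ> F" by (simp add: sig_def fun_eq_iff)
  then show ?thesis using perm_F permutation_finite_bij[OF bij_diff_right[of a]]
    by (simp add: permutation_compose)
qed

lemma sign_sig: "sign sig = sign (\<lambda>x::'g. x - a) * (-1) ^ (card (UNIV :: 'g set) - 1)"
proof -
  have "sig = (\<lambda>x. x - a) \<circ> F" by (simp add: sig_def fun_eq_iff)
  then show ?thesis using perm_F permutation_finite_bij[OF bij_diff_right[of a]] sign_F
    by (simp add: sign_compose)
qed

lemma inj_sig: "inj sig"
  using permutation_bijective[OF perm_sig] by (simp add: bij_def)

lemma not_cyc: "iota \<noteq> tau + a" "iota \<noteq> tau + b"
proof -
  have "\<not> ham_cycle a b P" using nocyc by blast
  then have "\<not> cay_arc a b tau iota" using ham nonempty by (simp add: ham_cycle_def tau_def iota_def)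
  then show "iota \<noteq> tau + a" "iota \<noteq> tau + b" by (auto simp: cay_arc_def)
qed

lemma R2: assumes "y \<noteq> tau" "sig y = y - h" "y - h \<noteq> tau"
  shows "sig (y - h) = y - h - h"
proof -
  have "y - h \<noteq> y" using h_nz by simp
  then have "sig (y - h) \<noteq> sig y" using inj_sig by (meson injD)
  then show ?thesis using sig_cases[OF assms(3)] assms(2) by auto
qed

lemma R2iter: assumes "y \<noteq> tau" "sig y = y - h" "\<forall>i\<le>n. y - nm i h \<noteq> tau"
  shows "sig (y - nm n h) = y - nm n h - h"
  using assms(3)
proof (induction n)
  case 0 then show ?case using assms(2) by simp
next
  case (Suc n)
  have IH: "sig (y - nm n h) = y - nm n h - h" using Suc by simp
  have e: "y - nm (Suc n) h = y - nm n h - h" by (simp add: algebra_simps)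
  have t1: "y - nm n h \<noteq> tau" using Suc.prems by simp
  have t2: "y - nm n h - h \<noteq> tau" using Suc.prems e by (metis order_refl)
  have "sig (y - nm n h - h) = y - nm n h - h - h" by (rule R2[OF t1 IH t2])
  then show ?case unfolding e .
qed

lemma m_props: "0 < m" "nm m h = 0"
  using ordr_props[of h] m_def by auto

lemma m_inj: "i < m \<Longrightarrow> j < m \<Longrightarrow> nm i h = nm j h \<Longrightarrow> i = j"
  using ordr_inj[of i h j] m_def by auto

lemma m_ge2: "2 \<le> m"
proof (rule ccontr)
  assume "\<not> 2 \<le> m"
  then have "m = 1" using m_props by simp
  then show False using m_props h_nz by simp
qed

lemma vv0: "vv 0 = tau" by (simp add: vv_def)
lemma vv_Suc: "vv (Suc j) = vv j + h" by (simp add: vv_def algebra_simps)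
lemma vv_mod: "vv (j mod m) = vv j" using nm_mod[OF m_props(2)] by (simp add: vv_def)
lemma vv_m: "vv (j + m) = vv j" using vv_mod[of "j + m"] vv_mod[of j] by simp
lemma vv_inj: "i < m \<Longrightarrow> j < m \<Longrightarrow> vv i = vv j \<Longrightarrow> i = j"
  using m_inj by (simp add: vv_def)
lemma vv_diff: "i \<le> j \<Longrightarrow> vv j - nm i h = vv (j - i)"
  using nm_diff[of i j h] by (simp add: vv_def algebra_simps)
lemma vv_in_C0: "vv j \<in> C0"
proof -
  have "j mod m < m" using m_props by simp
  then show ?thesis unfolding C0_def using vv_mod[of j] by (metis image_eqI lessThan_iff)
qed
lemma vv_ne_tau: "1 \<le> j \<Longrightarrow> j < m \<Longrightarrow> vv j \<noteq> tau"
  using vv_inj[of j 0] m_props vv0 by auto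

lemma C0_minus: "y \<notin> C0 \<Longrightarrow> y - h \<notin> C0"
proof
  assume "y \<notin> C0" "y - h \<in> C0"
  then obtain j where "y - h = vv j" by (auto simp: C0_def)
  then have "y = vv (Suc j)" by (simp add: vv_Suc algebra_simps)
  then show False using \<open>y \<notin> C0\<close> vv_in_C0 by simp
qed

lemma path_structure:
  "\<exists>k. 1 \<le> k \<and> k + 2 \<le> m \<and> sig tau = vv k \<and>
     (\<forall>j. 1 \<le> j \<longrightarrow> j < m \<longrightarrow> (sig (vv j) \<noteq> vv j \<longleftrightarrow> j \<le> k))"
proof -
  define D where "D = {j. 1 \<le> j \<and> j < m \<and> sig (vv j) \<noteq> vv j}"
  define k where "k = Max (insert 0 D)"
  have finD: "finite D" unfolding D_def by auto
  have Dk: "j \<in> D \<Longrightarrow> j \<le> k" for j unfolding k_def using finD by simp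
  have kin: "k \<in> insert 0 D" unfolding k_def using finD by (intro Max_in) auto
  have km: "k < m" using kin m_props by (auto simp: D_def)
  have down: "sig (vv j) \<noteq> vv j" if j: "1 \<le> j" "j \<le> k" for j
  proof -
    have "k \<in> D" using kin j by auto
    then have k1: "1 \<le> k" "sig (vv k) \<noteq> vv k" by (auto simp: D_def)
    then have sk: "sig (vv k) = vv k - h" using sig_cases[OF vv_ne_tau[OF k1(1) km]] by auto
    have "\<forall>i\<le>k - j. vv k - nm i h \<noteq> tau"
    proof (intro allI impI)
      fix i assume "i \<le> k - j"
      then show "vv k - nm i h \<noteq> tau" using vv_diff[of i k] vv_ne_tau[of "k - i"] j km by auto
    qed
    from R2iter[OF vv_ne_tau[OF k1(1) km] sk this]
    have "sig (vv k - nm (k - j) h) = vv k - nm (k - j) h - h" .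
    moreover have "vv k - nm (k - j) h = vv j" using vv_diff[of "k - j" k] j by simp
    ultimately show ?thesis using h_nz by simp
  qed
  have equiv: "\<forall>j. 1 \<le> j \<longrightarrow> j < m \<longrightarrow> (sig (vv j) \<noteq> vv j \<longleftrightarrow> j \<le> k)"
    using down Dk by (auto simp: D_def)
  have stau: "sig tau = vv k"
  proof -
    obtain y where y: "sig y = vv k"
      using permutation_bijective[OF perm_sig] by (metis bij_pointE)
    show ?thesis
    proof (rule ccontr)
      assume "sig tau \<noteq> vv k"
      then have yt: "y \<noteq> tau" using y by auto
      show False
      proof (cases "sig y = y")
        case True
        then have "y = vv k" using y by simp
        show False
        proof (cases "k = 0")
          case True then show False using \<open>y = vv k\<close> yt vv0 by simp
        next
          case False
          then have "sig (vv k) \<noteq> vv k" using down[of k] by simp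
          then show False using \<open>y = vv k\<close> \<open>sig y = y\<close> by simp
        qed
      next
        case False
        then have sy: "sig y = y - h" using sig_cases[OF yt] by simp
        then have yv: "y = vv (Suc k)" using y by (simp add: vv_Suc algebra_simps)
        show False
        proof (cases "Suc k < m")
          case True
          then have "sig (vv (Suc k)) = vv (Suc k)" using equiv by auto
          then show False using yv False by simp
        next
          case False
          then have "Suc k = m" using km by simp
          then have "y = tau" using yv vv_m[of 0] vv0 by simp
          then show False using yt by simp
        qed
      qed
    qed
  qed
  have Ftau: "F tau = vv k + a" using stau by (simp add: sig_def algebra_simps)
  have k0: "k \<noteq> 0"
  proof
    assume "k = 0"
    then have "iota = tau + a" using Ftau F_tau vv0 by simp
    then show False using not_cyc by simp
  qed
  have km1: "k \<noteq> m - 1"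
  proof
    assume "k = m - 1"
    then have "vv k + h = vv 0" using vv_Suc[of k] vv_m[of 0] m_props by simp
    then have "vv k = tau - h" using vv0 by (simp add: algebra_simps)
    then have "iota = tau + b" using Ftau F_tau by (simp add: h_def algebra_simps)
    then show False using not_cyc by simp
  qed
  show ?thesis using k0 km1 km stau equiv by (intro exI[of _ k]) auto
qed

lemma decomp:
  assumes k: "1 \<le> k" "k + 2 \<le> m" "sig tau = vv k"
    and eq: "\<forall>j. 1 \<le> j \<longrightarrow> j < m \<longrightarrow> (sig (vv j) \<noteq> vv j \<longleftrightarrow> j \<le> k)"
  shows "permutation (restrict_id sig (- C0))" "sign sig = (-1) ^ k * sign (restrict_id sig (- C0))"
proof -
  define cs where "cs = AP (vv k) (-h) (Suc k)"
  have el: "vv k + nm i (-h) = vv (k - i)" if "i \<le> k" for i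
    using vv_diff[OF that] by (simp add: nm_neg)
  have setcs: "y \<in> set cs \<longleftrightarrow> (\<exists>j\<le>k. y = vv j)" for y
  proof
    assume "y \<in> set cs"
    then have "y \<in> (\<lambda>j. vv k + nm j (-h)) ` {0..<Suc k}" by (simp only: cs_def AP_def set_map set_upt)
    then obtain i where "i \<in> {0..<Suc k}" "y = vv k + nm i (-h)" by blast
    then show "\<exists>j\<le>k. y = vv j" using el[of i] by (intro exI[of _ "k - i"]) auto
  next
    assume "\<exists>j\<le>k. y = vv j"
    then obtain j where j: "j \<le> k" "y = vv j" by blast
    then have "y = vv k + nm (k - j) (-h)" using el[of "k - j"] by simp
    then show "y \<in> set cs" unfolding cs_def AP_def set_map set_upt
      by (rule image_eqI) simp
  qed
  have dist: "distinct cs"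
  proof -
    have "inj_on (\<lambda>i. vv k + nm i (-h)) {0..<Suc k}"
    proof (rule inj_onI)
      fix i i' assume ii: "i \<in> {0..<Suc k}" "i' \<in> {0..<Suc k}" "vv k + nm i (-h) = vv k + nm i' (-h)"
      then have "vv (k - i) = vv (k - i')" using el[of i] el[of i'] by simp
      then have "k - i = k - i'" using vv_inj ii k by simp
      then show "i = i'" using ii by auto
    qed
    then show ?thesis unfolding cs_def AP_def distinct_map set_upt by (intro conjI distinct_upt)
  qed
  have lastel: "vv k + nm (Suc k - 1) (-h) = tau" using el[of k] vv0 by simp
  have cyc: "cycle_of_list cs y = (if y \<in> set cs then (if y = tau then vv k else y - h) else y)" for y
    using AP_cycle[of "vv k" "-h" "Suc k" y] dist lastel by (simp add: cs_def)
  define r where "r = restrict_id sig (- C0)"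
  have dec: "sig = cycle_of_list cs \<circ> r"
  proof
    fix y
    show "sig y = (cycle_of_list cs \<circ> r) y"
    proof (cases "y \<in> C0")
      case True
      then obtain j where j: "j < m" "y = vv j" by (auto simp: C0_def)
      have ry: "r y = y" using True by (simp add: r_def restrict_id_def)
      show ?thesis
      proof (cases "j = 0")
        case True
        then have yt: "y = tau" using j vv0 by simp
        have inc: "y \<in> set cs" unfolding setcs by (intro exI[of _ 0]) (simp add: vv0 yt)
        have "cycle_of_list cs y = vv k" using cyc[of y] inc yt by simp
        then show ?thesis using ry k(3) yt by simp
      next
        case nz: False
        have j1: "1 \<le> j" using nz by simp
        have yt: "y \<noteq> tau" using vv_ne_tau[OF j1 j(1)] j(2) by simp
        show ?thesis
        proof (cases "j \<le> k")
          case True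
          have ne: "sig (vv j) \<noteq> vv j" using eq j1 j(1) True by blast
          have sy: "sig y = y - h" using sig_cases[OF yt] ne j(2) by auto
          have inc: "y \<in> set cs" unfolding setcs using True j(2) by blast
          have "cycle_of_list cs y = y - h" using cyc[of y] inc yt by simp
          then show ?thesis using ry sy by simp
        next
          case False': False
          have "sig (vv j) = vv j" using eq j1 j(1) False' by blast
          then have sy: "sig y = y" using j(2) by simp
          have "y \<notin> set cs"
          proof
            assume "y \<in> set cs"
            then obtain j' where j': "j' \<le> k" "y = vv j'" using setcs by blast
            have "j' < m" using j' k by simp
            then have "j' = j" using vv_inj[of j' j] j j' by simp
            then show False using False' j' by simp
          qed
          then have "cycle_of_list cs y = y" using cyc[of y] by simp
          then show ?thesis using ry sy by simp
        qed
      qed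
    next
      case False
      have ry: "r y = sig y" using False by (simp add: r_def restrict_id_def)
      have yt: "y \<noteq> tau" using False vv_in_C0[of 0] vv0 by metis
      have "sig y \<notin> C0" using sig_cases[OF yt] False C0_minus by metis
      have "sig y \<notin> set cs" unfolding setcs
      proof
        assume "\<exists>j\<le>k. sig y = vv j"
        then obtain j where "sig y = vv j" by blast
        then show False using \<open>sig y \<notin> C0\<close> vv_in_C0[of j] by simp
      qed
      then show ?thesis using ry cyc[of "sig y"] by simp
    qed
  qed
  have pc: "permutation (cycle_of_list cs)" by (rule permutation_of_cycle)
  have "inv (cycle_of_list cs) \<circ> sig = r"
    unfolding dec o_assoc permutation_inverse_works(1)[OF pc] id_comp ..
  then have pr: "permutation r"
    using permutation_compose[OF permutation_inverse[OF pc] perm_sig] by simp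
  then show "permutation (restrict_id sig (- C0))" by (simp add: r_def)
  have "sign sig = sign (cycle_of_list cs) * sign r"
    by (subst dec) (rule sign_compose[OF pc pr])
  also have "sign (cycle_of_list cs) = (-1) ^ k" using sign_AP[of "vv k" "-h" "Suc k"] dist
    by (simp add: cs_def)
  finally show "sign sig = (-1) ^ k * sign (restrict_id sig (- C0))" by (simp add: r_def)
qed

end

lemma arith_core:
  fixes m k k' d :: nat
  assumes em: "even m" and k: "1 \<le> k" "k + 2 \<le> m" and k': "1 \<le> k'" "k' + 2 \<le> m"
    and d: "d < m" and par: "even (k + k')"
    and Q: "\<And>j. 1 \<le> j \<Longrightarrow> j < m \<Longrightarrow> j \<noteq> d \<Longrightarrow>
              (j \<le> k \<longleftrightarrow> \<not> ((if d \<le> j then j - d else j + m - d) \<le> k'))"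
  shows "(d = k \<and> k' + k = m) \<or> (d = k + 1 \<and> k' + k + 2 = m)"
proof -
  have Q1: "j \<le> k \<longleftrightarrow> \<not> (j - d \<le> k')" if "1 \<le> j" "j < m" "d < j" for j
    using Q[of j] that by simp
  have Q2: "j \<le> k \<longleftrightarrow> \<not> (j + m - d \<le> k')" if "1 \<le> j" "j < d" for j
    using Q[of j] that d by simp
  have "\<not> d < k"
  proof
    assume "d < k"
    then show False using Q1[of "d + 1"] k k' by simp
  qed
  moreover have "\<not> k + 2 \<le> d"
  proof
    assume "k + 2 \<le> d"
    then have "d - 1 \<le> k \<longleftrightarrow> \<not> (d - 1 + m - d \<le> k')" using Q2[of "d - 1"] by simp
    then show False using k k' \<open>k + 2 \<le> d\<close> d by arith
  qed
  moreover have "d = k \<Longrightarrow> k' + k = m"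
  proof -
    assume dk: "d = k"
    have "m - 1 \<le> k \<longleftrightarrow> \<not> (m - 1 - d \<le> k')" using Q1[of "m - 1"] k dk by simp
    then have a1: "m - 1 - k \<le> k'" using k dk by arith
    have a2: "k' \<le> m - k"
    proof (cases "k = 1")
      case True then show ?thesis using k' by simp
    next
      case False
      then have "1 \<le> k \<longleftrightarrow> \<not> (1 + m - d \<le> k')" using Q2[of 1] k dk by simp
      then show ?thesis using k dk by arith
    qed
    show ?thesis
    proof (rule ccontr)
      assume "k' + k \<noteq> m"
      then have "k' + k + 1 = m" using a1 a2 k by arith
      then show False using em par by presburger
    qed
  qed
  moreover have "d = k + 1 \<Longrightarrow> k' + k + 2 = m"
  proof -
    assume dk: "d = k + 1"
    have "1 \<le> k \<longleftrightarrow> \<not> (1 + m - d \<le> k')" using Q2[of 1] k dk by simp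
    then have a2: "k' + k + 1 \<le> m" using k dk by arith
    have a1: "m \<le> k' + k + 2"
    proof (cases "k + 2 = m")
      case True then show ?thesis by simp
    next
      case False
      then have "m - 1 \<le> k \<longleftrightarrow> \<not> (m - 1 - d \<le> k')" using Q1[of "m - 1"] k dk by simp
      then show ?thesis using k dk False by arith
    qed
    show ?thesis
    proof (rule ccontr)
      assume "k' + k + 2 \<noteq> m"
      then have "k' + k + 1 = m" using a1 a2 by arith
      then show False using em par by presburger
    qed
  qed
  ultimately show ?thesis by linarith
qed


theorem mainTheorem10:
  fixes a b :: "'g::{ab_group_add,finite}"
    and P P' :: "'g list"
  assumes "a \<noteq> b"
    and "gen_subgroup {a, b} = UNIV"
    and "\<not> (\<exists>C. ham_cycle a b C)"
    and "even (card (UNIV :: 'g set))"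
    and "odd (subgroup_index (gen_subgroup {a - b}))"
    and "ham_path a b P" and "ham_path a b P'"
    and "path_arcs P \<inter> path_arcs P' = {}"
  shows "hd P' + last P' = hd P + last P"
proof -
  define h where "h = a - b"
  define m where "m = ordr h"
  interpret A: hpath a b P h m using assms by unfold_locales (simp_all add: h_def m_def)
  interpret B: hpath a b P' h m using assms by unfold_locales (simp_all add: h_def m_def)
  obtain k where k: "1 \<le> k" "k + 2 \<le> m" "A.sig A.tau = A.vv k"
    "\<forall>j. 1 \<le> j \<longrightarrow> j < m \<longrightarrow> (A.sig (A.vv j) \<noteq> A.vv j \<longleftrightarrow> j \<le> k)"
    using A.path_structure by blast
  obtain k' where k': "1 \<le> k'" "k' + 2 \<le> m" "B.sig B.tau = B.vv k'"
    "\<forall>j. 1 \<le> j \<longrightarrow> j < m \<longrightarrow> (B.sig (B.vv j) \<noteq> B.vv j \<longleftrightarrow> j \<le> k')"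
    using B.path_structure by blast
  have comp: "B.sig y = y \<longleftrightarrow> A.sig y \<noteq> y" if "y \<noteq> A.tau" "y \<noteq> B.tau" for y
  proof -
    have "(y, A.F y) \<in> path_arcs P" "(y, B.F y) \<in> path_arcs P'"
      using A.F_in_arcs B.F_in_arcs that by auto
    then have "A.F y \<noteq> B.F y" using assms(8) by auto
    then have "A.sig y \<noteq> B.sig y" by (simp add: A.sig_def B.sig_def)
    then show ?thesis using A.sig_cases[OF that(1)] B.sig_cases[OF that(2)] by auto
  qed
  have mp: "0 < m" "nm m h = 0" using A.m_props by auto
  have minj: "\<And>i j. i < m \<Longrightarrow> j < m \<Longrightarrow> nm i h = nm j h \<Longrightarrow> i = j" using A.m_inj by blast
  have m2: "2 \<le> m" by (rule A.m_ge2)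
  have dvdU: "m dvd card (UNIV :: 'g set)"
  proof -
    have "m dvd card (UNIV :: 'g set) \<and> permutation (restrict_id (\<lambda>x. x + h) (UNIV :: 'g set)) \<and>
      sign (restrict_id (\<lambda>x. x + h) (UNIV :: 'g set)) = (-1) ^ ((m - 1) * (card (UNIV :: 'g set) div m))"
      by (rule transl_sign[OF mp minj]) auto
    then show ?thesis by blast
  qed
  have nm_in: "nm j h \<in> (\<lambda>j. nm j h) ` {..<m}" for j
  proof -
    have "j mod m < m" using mp by simp
    then show ?thesis using nm_mod[OF mp(2), of j] by (metis image_eqI lessThan_iff)
  qed
  have Hgen: "gen_subgroup {a - b} = (\<lambda>j. nm j h) ` {..<m}"
  proof
    show "gen_subgroup {a - b} \<subseteq> (\<lambda>j. nm j h) ` {..<m}"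
    proof
      fix x assume "x \<in> gen_subgroup {a - b}"
      then show "x \<in> (\<lambda>j. nm j h) ` {..<m}"
      proof (induction rule: gen_subgroup.induct)
        case (base x)
        then have "x = nm 1 h" by (simp add: h_def)
        then show ?case using nm_in[of 1] by (simp only:)
      next
        case zero
        then show ?case using nm_in[of 0] by simp
      next
        case (add x y)
        then obtain i j where "x = nm i h" "y = nm j h" by blast
        then have "x + y = nm (i + j) h" by (simp add: nm_add)
        then show ?case using nm_in[of "i + j"] by (simp only:)
      next
        case (neg x)
        then obtain j where x: "x = nm j h" by blast
        have "j \<le> m * j" using mp by simp
        then have "nm (m * j - j) h = - x" using nm_diff[of j "m * j" h] nm_mult_zero[OF mp(2)] x by simp
        then show ?case using nm_in[of "m * j - j"] by simp
      qed
    qed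
    show "(\<lambda>j. nm j h) ` {..<m} \<subseteq> gen_subgroup {a - b}"
    proof
      fix x assume "x \<in> (\<lambda>j. nm j h) ` {..<m}"
      then obtain j where x: "x = nm j h" by blast
      have "nm j h \<in> gen_subgroup {a - b}" for j
      proof (induction j)
        case 0 then show ?case by (simp add: gen_subgroup.zero)
      next
        case (Suc j)
        have "h \<in> gen_subgroup {a - b}" by (simp add: h_def gen_subgroup.base)
        then show ?case using Suc by (simp add: gen_subgroup.add)
      qed
      then show "x \<in> gen_subgroup {a - b}" using x by simp
    qed
  qed
  have cardH: "card (gen_subgroup {a - b}) = m"
  proof -
    have "inj_on (\<lambda>j. nm j h) {..<m}" using minj by (auto simp: inj_on_def)
    then show ?thesis unfolding Hgen by (simp add: card_image)
  qed
  define n where "n = card (UNIV :: 'g set) div m"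
  have nodd: "odd n" using assms(5) cardH by (simp add: subgroup_index_def n_def)
  have UNm: "card (UNIV :: 'g set) = m * n" using dvdU by (simp add: n_def)
  have meven: "even m" using assms(4) UNm nodd by simp
  have cardC0: "card A.C0 = m"
  proof -
    have "inj_on A.vv {..<m}" using A.vv_inj by (auto simp: inj_on_def)
    then show ?thesis unfolding A.C0_def by (simp add: card_image)
  qed
  have tau_in: "A.tau \<in> A.C0" using A.vv_in_C0[of 0] A.vv0 by simp
  have tin: "B.tau \<in> A.C0"
  proof (rule ccontr)
    assume nin: "B.tau \<notin> A.C0"
    have m1: "1 \<le> m - 1" "m - 1 < m" using m2 by auto
    have v1: "A.sig (A.vv 1) \<noteq> A.vv 1" using k(1,4) m2 by simp
    have "\<not> m - 1 \<le> k" using k(2) by simp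
    then have vm: "A.sig (A.vv (m - 1)) = A.vv (m - 1)" using k(4) m1 by blast
    have nt1: "A.vv 1 \<noteq> A.tau" "A.vv 1 \<noteq> B.tau"
      using A.vv_ne_tau[of 1] m2 nin A.vv_in_C0[of 1] by auto
    have ntm: "A.vv (m - 1) \<noteq> A.tau" "A.vv (m - 1) \<noteq> B.tau"
      using A.vv_ne_tau[OF m1] nin A.vv_in_C0[of "m - 1"] by auto
    have b1: "B.sig (A.vv 1) = A.vv 1" using comp[OF nt1] v1 by simp
    have "B.sig (A.vv (m - 1)) \<noteq> A.vv (m - 1)" using comp[OF ntm] vm by simp
    then have bm: "B.sig (A.vv (m - 1)) = A.vv (m - 1) - h" using B.sig_cases[OF ntm(2)] by simp
    have "\<forall>i\<le>m - 2. A.vv (m - 1) - nm i h \<noteq> B.tau"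
    proof (intro allI impI)
      fix i assume "i \<le> m - 2"
      then have "A.vv (m - 1) - nm i h = A.vv (m - 1 - i)" using A.vv_diff[of i "m - 1"] by simp
      then show "A.vv (m - 1) - nm i h \<noteq> B.tau" using nin A.vv_in_C0[of "m - 1 - i"] by auto
    qed
    from B.R2iter[OF ntm(2) bm this]
    have "B.sig (A.vv (m - 1) - nm (m - 2) h) = A.vv (m - 1) - nm (m - 2) h - h" .
    moreover have "A.vv (m - 1) - nm (m - 2) h = A.vv 1" using A.vv_diff[of "m - 2" "m - 1"] m2
      by (simp add: numeral_2_eq_2)
    ultimately have "B.sig (A.vv 1) = A.vv 1 - h" by simp
    then show False using b1 A.h_nz by simp
  qed
  then obtain d where d: "d < m" "B.tau = A.vv d" by (auto simp: A.C0_def)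
  have Bvv: "B.vv i = A.vv (d + i)" for i
    by (simp add: B.vv_def A.vv_def d(2) nm_add algebra_simps)
  have C0eq: "B.C0 = A.C0"
  proof
    show "B.C0 \<subseteq> A.C0" unfolding B.C0_def using Bvv A.vv_in_C0 by auto
    show "A.C0 \<subseteq> B.C0"
    proof
      fix y assume "y \<in> A.C0"
      then obtain j where j: "y = A.vv j" by (auto simp: A.C0_def)
      have "A.vv j = A.vv (j + m)" by (simp add: A.vv_m)
      also have "\<dots> = B.vv (j + m - d)" using Bvv[of "j + m - d"] d by simp
      finally show "y \<in> B.C0" using j B.vv_in_C0 by simp
    qed
  qed
  note dA = A.decomp[OF k(1) k(2) k(3) k(4)]
  note dB = B.decomp[OF k'(1) k'(2) k'(3) k'(4), unfolded C0eq]
  define rA where "rA = restrict_id A.sig (- A.C0)"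
  define rB where "rB = restrict_id B.sig (- A.C0)"
  have Btau_in: "B.tau \<in> A.C0" by (rule tin)
  have comp_rr: "rA \<circ> rB = restrict_id (\<lambda>x. x + - h) (- A.C0)"
  proof
    fix y
    show "(rA \<circ> rB) y = restrict_id (\<lambda>x. x + - h) (- A.C0) y"
    proof (cases "y \<in> A.C0")
      case True
      then show ?thesis by (simp add: rA_def rB_def restrict_id_def)
    next
      case False
      have yt: "y \<noteq> A.tau" "y \<noteq> B.tau" using False tau_in Btau_in by auto
      have yh: "y - h \<notin> A.C0" using A.C0_minus[OF False] .
      have yht: "y - h \<noteq> A.tau" "y - h \<noteq> B.tau" using yh tau_in Btau_in by auto
      show ?thesis
      proof (cases "B.sig y = y")
        case True
        then have "A.sig y = y - h" using comp[OF yt] A.sig_cases[OF yt(1)] by auto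
        then show ?thesis using True False by (simp add: rA_def rB_def restrict_id_def)
      next
        case False': False
        then have bs: "B.sig y = y - h" using B.sig_cases[OF yt(2)] by simp
        then have "B.sig (y - h) = y - h - h" using B.R2[OF yt(2) bs yht(2)] by simp
        then have "B.sig (y - h) \<noteq> y - h" using A.h_nz by simp
        then have "A.sig (y - h) = y - h" using comp[OF yht] by simp
        then show ?thesis using bs False yh by (simp add: rA_def rB_def restrict_id_def)
      qed
    qed
  qed
  have mpn: "0 < m" "nm m (- h) = 0" using mp by (auto simp: nm_neg)
  have minjn: "\<And>i j. i < m \<Longrightarrow> j < m \<Longrightarrow> nm i (- h) = nm j (- h) \<Longrightarrow> i = j"
    using minj by (simp add: nm_neg)
  have clos: "\<forall>x\<in>- A.C0. x + - h \<in> - A.C0" using A.C0_minus by simp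
  have ts: "m dvd card (- A.C0) \<and> permutation (restrict_id (\<lambda>x. x + - h) (- A.C0)) \<and>
      sign (restrict_id (\<lambda>x. x + - h) (- A.C0)) = (-1) ^ ((m - 1) * (card (- A.C0) div m))"
    by (rule transl_sign[OF mpn minjn]) (use clos in auto)
  have cardR: "card (- A.C0) = m * (n - 1)"
  proof -
    have "card (- A.C0) = card (UNIV :: 'g set) - card A.C0"
      by (simp add: Compl_eq_Diff_UNIV card_Diff_subset)
    then show ?thesis using cardC0 UNm by (simp add: algebra_simps)
  qed
  have e1: "card (- A.C0) div m = n - 1" using cardR mp by simp
  have "even (n - 1)" using nodd by simp
  then have ev: "even ((m - 1) * (card (- A.C0) div m))" unfolding e1 by simp
  have "sign (restrict_id (\<lambda>x. x + - h) (- A.C0)) = (-1) ^ ((m - 1) * (card (- A.C0) div m))"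
    using ts by blast
  also have "\<dots> = 1" using ev by (rule neg_one_even_power)
  finally have "sign (restrict_id (\<lambda>x. x + - h) (- A.C0)) = 1" .
  then have prod1: "sign rA * sign rB = 1"
    using comp_rr sign_compose[of rA rB] dA(1) dB(1) by (simp add: rA_def rB_def)
  have "sign A.sig = sign B.sig" using A.sign_sig B.sign_sig by simp
  then have eqs: "(-1) ^ k * sign rA = (-1) ^ k' * sign rB" using dA(2) dB(2) by (simp add: rA_def rB_def)
  have "(-1) ^ k * (sign rA * sign rA) = (-1) ^ k' * (sign rB * sign rA)"
    using eqs by (metis mult.assoc)
  then have "((-1) ^ k :: int) = (-1) ^ k'" using prod1 by (simp add: mult.commute)
  then have park: "even (k + k')" by (simp add: minus_one_power_iff split: if_splits)
  have Q: "(j \<le> k \<longleftrightarrow> \<not> ((if d \<le> j then j - d else j + m - d) \<le> k'))"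
    if j: "1 \<le> j" "j < m" "j \<noteq> d" for j
  proof -
    define i where "i = (if d \<le> j then j - d else j + m - d)"
    have i1: "1 \<le> i" "i < m" using j d by (auto simp: i_def)
    have Bi: "B.vv i = A.vv j"
    proof (cases "d \<le> j")
      case True then show ?thesis using Bvv[of i] by (simp add: i_def)
    next
      case False
      then have "B.vv i = A.vv (j + m)" using Bvv[of i] d by (simp add: i_def)
      then show ?thesis by (simp add: A.vv_m)
    qed
    have yt: "A.vv j \<noteq> A.tau" using A.vv_ne_tau j by simp
    have yt2: "A.vv j \<noteq> B.tau" using A.vv_inj[of j d] j d by auto
    have "A.sig (A.vv j) \<noteq> A.vv j \<longleftrightarrow> j \<le> k" using k(4) j by simp
    moreover have "B.sig (B.vv i) \<noteq> B.vv i \<longleftrightarrow> i \<le> k'" using k'(4) i1 by simp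
    ultimately show ?thesis using comp[OF yt yt2] Bi by (auto simp: i_def)
  qed
  have cases: "(d = k \<and> k' + k = m) \<or> (d = k + 1 \<and> k' + k + 2 = m)"
    by (rule arith_core[OF meven k(1) k(2) k'(1) k'(2) d(1) park Q])
  have hdP: "hd P = A.vv k + a" using A.F_tau k(3)
    by (simp add: A.iota_def A.sig_def algebra_simps)
  have lastP: "last P = A.vv 0" using A.vv0 by (simp add: A.tau_def)
  have hdP': "hd P' = A.vv (d + k') + a" using B.F_tau k'(3) Bvv[of k']
    by (simp add: B.iota_def B.sig_def algebra_simps)
  have lastP': "last P' = A.vv d" using d(2) by (simp add: B.tau_def)
  from cases show ?thesis
  proof
    assume c: "d = k \<and> k' + k = m"
    then have "d + k' = 0 + m" by simp
    then have "A.vv (d + k') = A.vv 0" using A.vv_m[of 0] by simp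
    then show ?thesis using hdP hdP' lastP lastP' c by (simp add: algebra_simps)
  next
    assume c: "d = k + 1 \<and> k' + k + 2 = m"
    have "A.vv (d + k') + A.vv d = A.vv 0 + A.vv (d + k' + d)"
      by (simp add: A.vv_def nm_add algebra_simps)
    also have "d + k' + d = k + m" using c by simp
    also have "A.vv (k + m) = A.vv k" by (rule A.vv_m)
    finally have "A.vv (d + k') + A.vv d = A.vv 0 + A.vv k" .
    then show ?thesis using hdP hdP' lastP lastP' by (simp add: algebra_simps)
  qed
qed

end
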